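(* Let $G$ and $H$ be topological groupoids and let $\pi\colon G\to H$ be a fiberwise groupoid covering map. Then for every $u\in G^0$, the restriction $\pi|_{G^u}\colon G^u\to H^{\pi(u)}$ (respectively $\pi|_{G_u}\colon G_u\to H_{\pi(u)}$) is a regular covering map implemented by the action of the group $\pi^{-1}(\pi(u))$ on $G^u$ by left multiplication (respectively on $G_u$ by right multiplication).
   Context: A topological groupoid is a small category with all morphisms invertible and a topology making multiplication and inversion continuous; $G^0$ is the unit space, $d,r$ domain and range, $G^u=r^{-1}(u)$, $G_u=d^{-1}(u)$. A fiberwise groupoid covering $\pi\colon G\to H$ is a surjective groupoid homomorphism that restricts to a homeomorphism $G^0\to H^0$ and is a local homeomorphism. For $u\in G^0$, $\pi^{-1}(\pi(u))$ is a group under the multiplication of $G$, all of whose elements have range and domain $u$. *)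

theory Defs
  imports "HOL-Analysis.Analysis"
begin

text \<open>A topological groupoid: the arrows are the points of the topology; units are
  identified with arrows (the unit space is the image of the domain map).\<close>
record 'a groupoid =
  gtop :: "'a topology"
  dom :: "'a \<Rightarrow> 'a"
  rng :: "'a \<Rightarrow> 'a"
  mult :: "'a \<Rightarrow> 'a \<Rightarrow> 'a"
  ginv :: "'a \<Rightarrow> 'a"

definition arrows :: "('a, 'b) groupoid_scheme \<Rightarrow> 'a set" where
  "arrows G = topspace (gtop G)"

definition units :: "('a, 'b) groupoid_scheme \<Rightarrow> 'a set" where
  "units G = dom G ` arrows G"

definition composable :: "('a, 'b) groupoid_scheme \<Rightarrow> ('a \<times> 'a) set" where
  "composable G = {(g, h). g \<in> arrows G \<and> h \<in> arrows G \<and> dom G g = rng G h}"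

definition is_groupoid :: "('a, 'b) groupoid_scheme \<Rightarrow> bool" where
  "is_groupoid G \<longleftrightarrow>
    (\<forall>g\<in>arrows G. dom G g \<in> arrows G \<and> rng G g \<in> arrows G) \<and>
    (\<forall>g\<in>arrows G. dom G (dom G g) = dom G g \<and> rng G (dom G g) = dom G g \<and>
                    dom G (rng G g) = rng G g \<and> rng G (rng G g) = rng G g) \<and>
    (\<forall>(g, h)\<in>composable G. mult G g h \<in> arrows G \<and>
        dom G (mult G g h) = dom G h \<and> rng G (mult G g h) = rng G g) \<and>
    (\<forall>g\<in>arrows G. \<forall>h\<in>arrows G. \<forall>k\<in>arrows G. dom G g = rng G h \<longrightarrow> dom G h = rng G k \<longrightarrow>
        mult G (mult G g h) k = mult G g (mult G h k)) \<and>
    (\<forall>g\<in>arrows G. mult G (rng G g) g = g \<and> mult G g (dom G g) = g) \<and>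
    (\<forall>g\<in>arrows G. ginv G g \<in> arrows G \<and> dom G (ginv G g) = rng G g \<and>
        rng G (ginv G g) = dom G g \<and>
        mult G g (ginv G g) = rng G g \<and> mult G (ginv G g) g = dom G g)"

definition topological_groupoid :: "('a, 'b) groupoid_scheme \<Rightarrow> bool" where
  "topological_groupoid G \<longleftrightarrow> is_groupoid G \<and>
    continuous_map (subtopology (prod_topology (gtop G) (gtop G)) (composable G)) (gtop G)
       (\<lambda>(g, h). mult G g h) \<and>
    continuous_map (gtop G) (gtop G) (ginv G)"

definition rfiber :: "('a, 'b) groupoid_scheme \<Rightarrow> 'a \<Rightarrow> 'a set" where
  "rfiber G u = {g \<in> arrows G. rng G g = u}"

definition dfiber :: "('a, 'b) groupoid_scheme \<Rightarrow> 'a \<Rightarrow> 'a set" where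
  "dfiber G u = {g \<in> arrows G. dom G g = u}"

definition groupoid_hom ::
  "('a, 'b) groupoid_scheme \<Rightarrow> ('c, 'd) groupoid_scheme \<Rightarrow> ('a \<Rightarrow> 'c) \<Rightarrow> bool" where
  "groupoid_hom G H p \<longleftrightarrow>
    (\<forall>g\<in>arrows G. p g \<in> arrows H \<and> p (dom G g) = dom H (p g) \<and> p (rng G g) = rng H (p g)) \<and>
    (\<forall>(g, h)\<in>composable G. p (mult G g h) = mult H (p g) (p h))"

definition local_homeomorphism :: "'a topology \<Rightarrow> 'b topology \<Rightarrow> ('a \<Rightarrow> 'b) \<Rightarrow> bool" where
  "local_homeomorphism X Y p \<longleftrightarrow>
    (\<forall>x\<in>topspace X. \<exists>U. openin X U \<and> x \<in> U \<and> openin Y (p ` U) \<and>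
        homeomorphic_map (subtopology X U) (subtopology Y (p ` U)) p)"

definition fiberwise_groupoid_covering ::
  "('a, 'b) groupoid_scheme \<Rightarrow> ('c, 'd) groupoid_scheme \<Rightarrow> ('a \<Rightarrow> 'c) \<Rightarrow> bool" where
  "fiberwise_groupoid_covering G H p \<longleftrightarrow>
    groupoid_hom G H p \<and> p ` arrows G = arrows H \<and>
    homeomorphic_map (subtopology (gtop G) (units G)) (subtopology (gtop H) (units H)) p \<and>
    local_homeomorphism (gtop G) (gtop H) p"

definition covering_map :: "'a topology \<Rightarrow> 'b topology \<Rightarrow> ('a \<Rightarrow> 'b) \<Rightarrow> bool" where
  "covering_map X Y p \<longleftrightarrow> continuous_map X Y p \<and> p ` topspace X = topspace Y \<and>
    (\<forall>y\<in>topspace Y. \<exists>V. openin Y V \<and> y \<in> V \<and>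
       (\<exists>\<U>. \<Union>\<U> = {x \<in> topspace X. p x \<in> V} \<and> pairwise disjnt \<U> \<and>
          (\<forall>U\<in>\<U>. openin X U \<and> homeomorphic_map (subtopology X U) (subtopology Y V) p)))"

definition regular_covering_by ::
  "'a topology \<Rightarrow> 'b topology \<Rightarrow> ('a \<Rightarrow> 'b) \<Rightarrow> 'g set \<Rightarrow> ('g \<Rightarrow> 'a \<Rightarrow> 'a) \<Rightarrow> bool" where
  "regular_covering_by X Y p \<Gamma> act \<longleftrightarrow> covering_map X Y p \<and>
    (\<forall>\<gamma>\<in>\<Gamma>. homeomorphic_map X X (act \<gamma>) \<and> (\<forall>x\<in>topspace X. p (act \<gamma> x) = p x)) \<and>
    (\<forall>\<gamma>\<in>\<Gamma>. \<forall>\<delta>\<in>\<Gamma>. \<forall>x\<in>topspace X. act \<gamma> x = act \<delta> x \<longrightarrow> \<gamma> = \<delta>) \<and>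
    (\<forall>x\<in>topspace X. \<forall>y\<in>topspace X. p x = p y \<longleftrightarrow> (\<exists>\<gamma>\<in>\<Gamma>. y = act \<gamma> x))"

end

theory Submission
  imports Defs
begin

lemma gd_parts:
  shows "is_groupoid G \<Longrightarrow> \<forall>g\<in>arrows G. dom G g \<in> arrows G \<and> rng G g \<in> arrows G"
    and "is_groupoid G \<Longrightarrow> \<forall>g\<in>arrows G. dom G (dom G g) = dom G g \<and> rng G (dom G g) = dom G g \<and>
                    dom G (rng G g) = rng G g \<and> rng G (rng G g) = rng G g"
    and "is_groupoid G \<Longrightarrow> \<forall>(g, h)\<in>composable G. mult G g h \<in> arrows G \<and>
        dom G (mult G g h) = dom G h \<and> rng G (mult G g h) = rng G g"
    and "is_groupoid G \<Longrightarrow> \<forall>g\<in>arrows G. \<forall>h\<in>arrows G. \<forall>k\<in>arrows G. dom G g = rng G h \<longrightarrow> dom G h = rng G k \<longrightarrow>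
        mult G (mult G g h) k = mult G g (mult G h k)"
    and "is_groupoid G \<Longrightarrow> \<forall>g\<in>arrows G. mult G (rng G g) g = g \<and> mult G g (dom G g) = g"
    and "is_groupoid G \<Longrightarrow> \<forall>g\<in>arrows G. ginv G g \<in> arrows G \<and> dom G (ginv G g) = rng G g \<and>
        rng G (ginv G g) = dom G g \<and>
        mult G g (ginv G g) = rng G g \<and> mult G (ginv G g) g = dom G g"
  unfolding is_groupoid_def by ((elim conjE)?, assumption)+

lemma gd_arr: "is_groupoid G \<Longrightarrow> g \<in> arrows G \<Longrightarrow> dom G g \<in> arrows G \<and> rng G g \<in> arrows G"
  using gd_parts(1) by blast
lemma gd_dd: "is_groupoid G \<Longrightarrow> g \<in> arrows G \<Longrightarrow> dom G (dom G g) = dom G g \<and> rng G (dom G g) = dom G g \<and>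
                    dom G (rng G g) = rng G g \<and> rng G (rng G g) = rng G g"
  using gd_parts(2) by blast
lemma gd_mult: "is_groupoid G \<Longrightarrow> g \<in> arrows G \<Longrightarrow> h \<in> arrows G \<Longrightarrow> dom G g = rng G h \<Longrightarrow>
   mult G g h \<in> arrows G \<and> dom G (mult G g h) = dom G h \<and> rng G (mult G g h) = rng G g"
proof -
  assume a: "is_groupoid G" "g \<in> arrows G" "h \<in> arrows G" "dom G g = rng G h"
  then have "(g, h) \<in> composable G" unfolding composable_def by simp
  with gd_parts(3)[OF a(1)] show ?thesis by fast
qed
lemma gd_assoc: "is_groupoid G \<Longrightarrow> g \<in> arrows G \<Longrightarrow> h \<in> arrows G \<Longrightarrow> k \<in> arrows G \<Longrightarrow>
   dom G g = rng G h \<Longrightarrow> dom G h = rng G k \<Longrightarrow> mult G (mult G g h) k = mult G g (mult G h k)"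
  using gd_parts(4) by blast
lemma gd_unit: "is_groupoid G \<Longrightarrow> g \<in> arrows G \<Longrightarrow> mult G (rng G g) g = g \<and> mult G g (dom G g) = g"
  using gd_parts(5) by blast
lemma gd_inv: "is_groupoid G \<Longrightarrow> g \<in> arrows G \<Longrightarrow> ginv G g \<in> arrows G \<and> dom G (ginv G g) = rng G g \<and>
        rng G (ginv G g) = dom G g \<and> mult G g (ginv G g) = rng G g \<and> mult G (ginv G g) g = dom G g"
  using gd_parts(6) by blast

lemma units_iff: "is_groupoid G \<Longrightarrow> x \<in> units G \<longleftrightarrow> x \<in> arrows G \<and> dom G x = x"
proof
  assume G: "is_groupoid G" and "x \<in> units G"
  then obtain g where "g \<in> arrows G" "x = dom G g" unfolding units_def by blast
  then show "x \<in> arrows G \<and> dom G x = x" using gd_arr[OF G] gd_dd[OF G] by simp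
next
  assume "x \<in> arrows G \<and> dom G x = x"
  then show "x \<in> units G" unfolding units_def by (intro image_eqI[of x "dom G" x]) auto
qed

lemma units_sub: "is_groupoid G \<Longrightarrow> units G \<subseteq> arrows G"
  by (auto simp: units_iff)

lemma rng_units: "is_groupoid G \<Longrightarrow> x \<in> arrows G \<Longrightarrow> rng G x \<in> units G"
  by (simp add: units_iff gd_arr gd_dd)

lemma dom_units: "is_groupoid G \<Longrightarrow> x \<in> arrows G \<Longrightarrow> dom G x \<in> units G"
  by (simp add: units_iff gd_arr gd_dd)

lemma unit_rng: "is_groupoid G \<Longrightarrow> x \<in> units G \<Longrightarrow> rng G x = x"
proof -
  assume G: "is_groupoid G" and x: "x \<in> units G"
  then have "x \<in> arrows G" "dom G x = x" by (simp_all add: units_iff)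
  then show "rng G x = x" using gd_dd[OF G, of x] by simp
qed

lemma lh_continuous:
  assumes lh: "local_homeomorphism X Y p"
  shows "continuous_map X Y p"
  unfolding continuous_map
proof (intro conjI allI impI)
  show "p ` topspace X \<subseteq> topspace Y"
  proof
    fix y assume "y \<in> p ` topspace X"
    then obtain x where x: "x \<in> topspace X" "y = p x" by blast
    then obtain U where U: "openin X U" "x \<in> U" "openin Y (p ` U)" using lh unfolding local_homeomorphism_def by blast
    then show "y \<in> topspace Y" using x openin_subset by blast
  qed
next
  fix W assume W: "openin Y W"
  show "openin X {x \<in> topspace X. p x \<in> W}"
  proof (subst openin_subopen, intro ballI)
    fix x assume x: "x \<in> {x \<in> topspace X. p x \<in> W}"
    then obtain U where U: "openin X U" "x \<in> U" "openin Y (p ` U)"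
      and h: "homeomorphic_map (subtopology X U) (subtopology Y (p ` U)) p"
      using lh unfolding local_homeomorphism_def by blast
    have c: "continuous_map (subtopology X U) Y p"
      using homeomorphic_imp_continuous_map[OF h] continuous_map_into_fulltopology by blast
    have "openin (subtopology X U) {y \<in> topspace (subtopology X U). p y \<in> W}"
      using c W unfolding continuous_map by blast
    then have o: "openin X {y \<in> topspace (subtopology X U). p y \<in> W}"
      using openin_trans_full U(1) by blast
    show "\<exists>T. openin X T \<and> x \<in> T \<and> T \<subseteq> {x \<in> topspace X. p x \<in> W}"
      apply (rule exI[of _ "{y \<in> topspace (subtopology X U). p y \<in> W}"])
      using o x U(2) by auto
  qed
qed

lemma rcase:
  assumes TG: "topological_groupoid G" and TH: "topological_groupoid H"
    and FC: "fiberwise_groupoid_covering G H p" and u: "u \<in> units G"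
  shows "regular_covering_by (subtopology (gtop G) (rfiber G u)) (subtopology (gtop H) (rfiber H (p u)))
           p {\<gamma> \<in> arrows G. p \<gamma> = p u} (\<lambda>\<gamma> g. mult G \<gamma> g)"
proof -
  have gG: "is_groupoid G" and gH: "is_groupoid H" using TG TH by (simp_all add: topological_groupoid_def)
  have contm: "continuous_map (subtopology (prod_topology (gtop G) (gtop G)) (composable G)) (gtop G) (\<lambda>(g,h). mult G g h)"
    using TG by (simp add: topological_groupoid_def)
  have hom: "groupoid_hom G H p" and surj: "p ` arrows G = arrows H"
    and hu: "homeomorphic_map (subtopology (gtop G) (units G)) (subtopology (gtop H) (units H)) p"
    and lh: "local_homeomorphism (gtop G) (gtop H) p"
    using FC by (auto simp: fiberwise_groupoid_covering_def)
  have injU: "inj_on p (units G)"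
    using homeomorphic_imp_injective_map[OF hu] units_sub[OF gG]
    by (simp add: arrows_def Int_absorb1)
  have pA: "\<And>g. g \<in> arrows G \<Longrightarrow> p g \<in> arrows H \<and> p (dom G g) = dom H (p g) \<and> p (rng G g) = rng H (p g)"
    using hom unfolding groupoid_hom_def by blast
  have pm: "\<And>g h. g \<in> arrows G \<Longrightarrow> h \<in> arrows G \<Longrightarrow> dom G g = rng G h \<Longrightarrow> p (mult G g h) = mult H (p g) (p h)"
  proof -
    fix g h assume "g \<in> arrows G" "h \<in> arrows G" "dom G g = rng G h"
    then have "(g, h) \<in> composable G" unfolding composable_def by simp
    then show "p (mult G g h) = mult H (p g) (p h)" using hom unfolding groupoid_hom_def by fast
  qed
  have uA: "u \<in> arrows G" "dom G u = u" "rng G u = u"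
    using u units_iff[OF gG] unit_rng[OF gG] by auto
  have rinj: "\<And>x y. x \<in> arrows G \<Longrightarrow> y \<in> arrows G \<Longrightarrow> p (rng G x) = p (rng G y) \<Longrightarrow> rng G x = rng G y"
    using injU rng_units[OF gG] by (meson inj_onD)
  have dinj: "\<And>x y. x \<in> arrows G \<Longrightarrow> y \<in> arrows G \<Longrightarrow> p (dom G x) = p (dom G y) \<Longrightarrow> dom G x = dom G y"
    using injU dom_units[OF gG] by (meson inj_onD)
  define RG where "RG = rfiber G u"
  define RH where "RH = rfiber H (p u)"
  define \<Gamma> where "\<Gamma> = {\<gamma> \<in> arrows G. p \<gamma> = p u}"
  have RGA: "RG \<subseteq> arrows G" unfolding RG_def rfiber_def by auto
  have RHA: "RH \<subseteq> arrows H" unfolding RH_def rfiber_def by auto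
  have topRG: "topspace (subtopology (gtop G) RG) = RG"
    using RGA by (simp add: arrows_def Int_absorb1)
  have topRH: "topspace (subtopology (gtop H) RH) = RH"
    using RHA by (simp add: arrows_def Int_absorb1)
  have RGi: "\<And>g. g \<in> RG \<longleftrightarrow> g \<in> arrows G \<and> rng G g = u" unfolding RG_def rfiber_def by simp
  have RHi: "\<And>g. g \<in> RH \<longleftrightarrow> g \<in> arrows H \<and> rng H g = p u" unfolding RH_def rfiber_def by simp
  have Gp: "\<And>\<gamma>. \<gamma> \<in> \<Gamma> \<Longrightarrow> \<gamma> \<in> arrows G \<and> dom G \<gamma> = u \<and> rng G \<gamma> = u"
  proof -
    fix \<gamma> assume g: "\<gamma> \<in> \<Gamma>"
    then have gA: "\<gamma> \<in> arrows G" and pg: "p \<gamma> = p u" unfolding \<Gamma>_def by auto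
    have "p (rng G \<gamma>) = p (rng G u)" using pA[OF gA] pA[OF uA(1)] pg by simp
    then have 1: "rng G \<gamma> = u" using rinj gA uA by metis
    have "p (dom G \<gamma>) = p (dom G u)" using pA[OF gA] pA[OF uA(1)] pg by simp
    then have 2: "dom G \<gamma> = u" using dinj gA uA by metis
    show "\<gamma> \<in> arrows G \<and> dom G \<gamma> = u \<and> rng G \<gamma> = u" using gA 1 2 by simp
  qed
  have pRG: "\<And>g. g \<in> RG \<Longrightarrow> p g \<in> RH"
    using pA RGi RHi by metis
  have act_in: "\<And>\<gamma> g. \<gamma> \<in> arrows G \<Longrightarrow> dom G \<gamma> = u \<Longrightarrow> rng G \<gamma> = u \<Longrightarrow> g \<in> RG \<Longrightarrow> mult G \<gamma> g \<in> RG"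
    using gd_mult[OF gG] RGi by metis
  have act_p: "\<And>\<gamma> g. \<gamma> \<in> \<Gamma> \<Longrightarrow> g \<in> RG \<Longrightarrow> p (mult G \<gamma> g) = p g"
  proof -
    fix \<gamma> g assume g: "\<gamma> \<in> \<Gamma>" and gR: "g \<in> RG"
    have gA: "g \<in> arrows G" "rng G g = u" using gR RGi by auto
    have "p (mult G \<gamma> g) = mult H (p \<gamma>) (p g)" using pm Gp[OF g] gA by simp
    also have "\<dots> = mult H (p u) (p g)" using g unfolding \<Gamma>_def by simp
    also have "\<dots> = mult H (rng H (p g)) (p g)" using pA[OF gA(1)] gA(2) by simp
    also have "\<dots> = p g" using gd_unit[OF gH] pA[OF gA(1)] by simp
    finally show "p (mult G \<gamma> g) = p g" .
  qed
  have cont_act: "\<And>\<gamma>. \<gamma> \<in> arrows G \<Longrightarrow> dom G \<gamma> = u \<Longrightarrow> rng G \<gamma> = u \<Longrightarrow>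
      continuous_map (subtopology (gtop G) RG) (subtopology (gtop G) RG) (mult G \<gamma>)"
  proof -
    fix \<gamma> assume g: "\<gamma> \<in> arrows G" "dom G \<gamma> = u" "rng G \<gamma> = u"
    have c1: "continuous_map (subtopology (gtop G) RG) (subtopology (prod_topology (gtop G) (gtop G)) (composable G)) (\<lambda>x. (\<gamma>, x))"
    proof (rule continuous_map_into_subtopology)
      show "continuous_map (subtopology (gtop G) RG) (prod_topology (gtop G) (gtop G)) (\<lambda>x. (\<gamma>, x))"
        apply (rule continuous_map_pairedI)
        using g(1) apply (simp add: arrows_def)
        by (simp add: continuous_map_from_subtopology)
      show "(\<lambda>x. (\<gamma>, x)) \<in> topspace (subtopology (gtop G) RG) \<rightarrow> composable G"
        using topRG RGi g unfolding composable_def by auto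
    qed
    have "continuous_map (subtopology (gtop G) RG) (gtop G) ((\<lambda>(g,h). mult G g h) \<circ> (\<lambda>x. (\<gamma>, x)))"
      using continuous_map_compose[OF c1 contm] .
    then have "continuous_map (subtopology (gtop G) RG) (gtop G) (mult G \<gamma>)"
      by (simp add: o_def)
    then show "continuous_map (subtopology (gtop G) RG) (subtopology (gtop G) RG) (mult G \<gamma>)"
      using act_in g topRG by (auto intro!: continuous_map_into_subtopology)
  qed
  have maps_act: "\<And>\<gamma>. \<gamma> \<in> \<Gamma> \<Longrightarrow> homeomorphic_maps (subtopology (gtop G) RG) (subtopology (gtop G) RG) (mult G \<gamma>) (mult G (ginv G \<gamma>))"
  proof -
    fix \<gamma> assume g: "\<gamma> \<in> \<Gamma>"
    note gg = Gp[OF g]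
    have ig: "ginv G \<gamma> \<in> arrows G" "dom G (ginv G \<gamma>) = u" "rng G (ginv G \<gamma>) = u"
      "mult G \<gamma> (ginv G \<gamma>) = u" "mult G (ginv G \<gamma>) \<gamma> = u"
      using gd_inv[OF gG gg[THEN conjunct1]] gg by auto
    have inv1: "\<And>x. x \<in> RG \<Longrightarrow> mult G (ginv G \<gamma>) (mult G \<gamma> x) = x"
    proof -
      fix x assume x: "x \<in> RG"
      then have xA: "x \<in> arrows G" "rng G x = u" using RGi by auto
      have "mult G (ginv G \<gamma>) (mult G \<gamma> x) = mult G (mult G (ginv G \<gamma>) \<gamma>) x"
        using gd_assoc[OF gG ig(1) gg[THEN conjunct1] xA(1)] ig gg xA by simp
      also have "\<dots> = x" using ig(5) xA gd_unit[OF gG xA(1)] by simp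
      finally show "mult G (ginv G \<gamma>) (mult G \<gamma> x) = x" .
    qed
    have inv2: "\<And>x. x \<in> RG \<Longrightarrow> mult G \<gamma> (mult G (ginv G \<gamma>) x) = x"
    proof -
      fix x assume x: "x \<in> RG"
      then have xA: "x \<in> arrows G" "rng G x = u" using RGi by auto
      have "mult G \<gamma> (mult G (ginv G \<gamma>) x) = mult G (mult G \<gamma> (ginv G \<gamma>)) x"
        using gd_assoc[OF gG gg[THEN conjunct1] ig(1) xA(1)] ig gg xA by simp
      also have "\<dots> = x" using ig(4) xA gd_unit[OF gG xA(1)] by simp
      finally show "mult G \<gamma> (mult G (ginv G \<gamma>) x) = x" .
    qed
    show "homeomorphic_maps (subtopology (gtop G) RG) (subtopology (gtop G) RG) (mult G \<gamma>) (mult G (ginv G \<gamma>))"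
      unfolding homeomorphic_maps_def topRG
      using cont_act gg ig inv1 inv2 by blast
  qed
  have homeo_act: "\<And>\<gamma>. \<gamma> \<in> \<Gamma> \<Longrightarrow> homeomorphic_map (subtopology (gtop G) RG) (subtopology (gtop G) RG) (mult G \<gamma>)"
    using maps_act homeomorphic_map_maps by blast
  have free: "\<And>\<gamma> \<delta> x. \<gamma> \<in> \<Gamma> \<Longrightarrow> \<delta> \<in> \<Gamma> \<Longrightarrow> x \<in> RG \<Longrightarrow> mult G \<gamma> x = mult G \<delta> x \<Longrightarrow> \<gamma> = \<delta>"
  proof -
    have key: "\<And>\<gamma> x. \<gamma> \<in> \<Gamma> \<Longrightarrow> x \<in> RG \<Longrightarrow> \<gamma> = mult G (mult G \<gamma> x) (ginv G x)"
    proof -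
      fix \<gamma> x assume g: "\<gamma> \<in> \<Gamma>" and x: "x \<in> RG"
      note gg = Gp[OF g]
      have xA: "x \<in> arrows G" "rng G x = u" using x RGi by auto
      have ix: "ginv G x \<in> arrows G" "dom G (ginv G x) = u" "mult G x (ginv G x) = u"
        using gd_inv[OF gG xA(1)] xA by auto
      have "mult G (mult G \<gamma> x) (ginv G x) = mult G \<gamma> (mult G x (ginv G x))"
        using gd_assoc[OF gG gg[THEN conjunct1] xA(1) ix(1)] gg xA ix gd_inv[OF gG xA(1)] by simp
      also have "\<dots> = \<gamma>" using ix(3) gd_unit[OF gG gg[THEN conjunct1]] gg by simp
      finally show "\<gamma> = mult G (mult G \<gamma> x) (ginv G x)" by simp
    qed
    fix \<gamma> \<delta> x assume "\<gamma> \<in> \<Gamma>" "\<delta> \<in> \<Gamma>" "x \<in> RG" "mult G \<gamma> x = mult G \<delta> x"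
    then show "\<gamma> = \<delta>" using key by metis
  qed
  have orbit: "\<And>x y. x \<in> RG \<Longrightarrow> y \<in> RG \<Longrightarrow> p x = p y \<longleftrightarrow> (\<exists>\<gamma>\<in>\<Gamma>. y = mult G \<gamma> x)"
  proof -
    fix x y assume x: "x \<in> RG" and y: "y \<in> RG"
    have xA: "x \<in> arrows G" "rng G x = u" using x RGi by auto
    have yA: "y \<in> arrows G" "rng G y = u" using y RGi by auto
    show "p x = p y \<longleftrightarrow> (\<exists>\<gamma>\<in>\<Gamma>. y = mult G \<gamma> x)"
    proof
      assume pxy: "p x = p y"
      have "p (dom G x) = p (dom G y)" using pA xA yA pxy by metis
      then have dxy: "dom G x = dom G y" using dinj xA yA by blast
      have ix: "ginv G x \<in> arrows G" "dom G (ginv G x) = u" "rng G (ginv G x) = dom G x"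
        "mult G x (ginv G x) = u" "mult G (ginv G x) x = dom G x"
        using gd_inv[OF gG xA(1)] xA by auto
      define \<gamma> where "\<gamma> = mult G y (ginv G x)"
      have gA: "\<gamma> \<in> arrows G" unfolding \<gamma>_def using gd_mult[OF gG yA(1) ix(1)] ix dxy by simp
      have "p \<gamma> = mult H (p y) (p (ginv G x))" unfolding \<gamma>_def using pm yA ix dxy by simp
      also have "\<dots> = mult H (p x) (p (ginv G x))" using pxy by simp
      also have "\<dots> = p (mult G x (ginv G x))" using pm[OF xA(1) ix(1)] ix by simp
      also have "\<dots> = p u" using ix by simp
      finally have g\<Gamma>: "\<gamma> \<in> \<Gamma>" unfolding \<Gamma>_def using gA by simp
      have "mult G \<gamma> x = mult G y (mult G (ginv G x) x)"
        unfolding \<gamma>_def using gd_assoc[OF gG yA(1) ix(1) xA(1)] ix dxy xA(2) by simp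
      also have "\<dots> = y" using ix dxy gd_unit[OF gG yA(1)] by simp
      finally show "\<exists>\<gamma>\<in>\<Gamma>. y = mult G \<gamma> x" using g\<Gamma> by metis
    next
      assume "\<exists>\<gamma>\<in>\<Gamma>. y = mult G \<gamma> x"
      then show "p x = p y" using act_p x by metis
    qed
  qed
  have cont_p: "continuous_map (gtop G) (gtop H) p" using lh_continuous[OF lh] .
  have pimg: "p ` RG = RH"
  proof
    show "p ` RG \<subseteq> RH" using pRG by blast
    show "RH \<subseteq> p ` RG"
    proof
      fix z assume z: "z \<in> RH"
      then obtain a where a: "a \<in> arrows G" "z = p a" using surj RHi by blast
      have "p (rng G a) = p (rng G u)" using pA a z RHi uA by metis
      then have "rng G a = u" using rinj a uA by metis
      then show "z \<in> p ` RG" using a RGi by blast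
    qed
  qed
  have cover: "covering_map (subtopology (gtop G) RG) (subtopology (gtop H) RH) p"
    unfolding covering_map_def topRG topRH
  proof (intro conjI ballI)
    show "continuous_map (subtopology (gtop G) RG) (subtopology (gtop H) RH) p"
    proof (rule continuous_map_into_subtopology)
      show "continuous_map (subtopology (gtop G) RG) (gtop H) p"
        using continuous_map_from_subtopology[OF cont_p] .
      show "p \<in> topspace (subtopology (gtop G) RG) \<rightarrow> RH" unfolding topRG using pRG by blast
    qed
    show "p ` RG = RH" by (rule pimg)
  next
    fix y assume y: "y \<in> RH"
    obtain g where g: "g \<in> RG" "p g = y" using pimg y by blast
    have "g \<in> topspace (gtop G)" using g RGA by (auto simp: arrows_def)
    then obtain U where U: "openin (gtop G) U" "g \<in> U" "openin (gtop H) (p ` U)"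
      and hU: "homeomorphic_map (subtopology (gtop G) U) (subtopology (gtop H) (p ` U)) p"
      using lh unfolding local_homeomorphism_def by blast
    have UA: "U \<subseteq> arrows G" using openin_subset[OF U(1)] by (simp add: arrows_def)
    have pUA: "p ` U \<subseteq> arrows H" using openin_subset[OF U(3)] by (simp add: arrows_def)
    define U' where "U' = U \<inter> RG"
    define V where "V = p ` U \<inter> RH"
    have pU': "p ` U' = V"
    proof
      show "p ` U' \<subseteq> V" unfolding U'_def V_def using pRG by blast
      show "V \<subseteq> p ` U'"
      proof
        fix z assume z: "z \<in> V"
        then obtain a where a: "a \<in> U" "z = p a" "z \<in> RH" unfolding V_def by blast
        have aA: "a \<in> arrows G" using a UA by blast
        have "p (rng G a) = p (rng G u)" using pA aA a RHi uA by metis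
        then have "rng G a = u" using rinj aA uA by metis
        then show "z \<in> p ` U'" unfolding U'_def using a aA RGi by blast
      qed
    qed
    have Vo: "openin (subtopology (gtop H) RH) V"
      unfolding V_def using openin_subtopology_Int[OF U(3)] .
    have yV: "y \<in> V" unfolding V_def using g U(2) y by blast
    have U'o: "openin (subtopology (gtop G) RG) U'"
      unfolding U'_def using openin_subtopology_Int[OF U(1)] .
    have U'RG: "U' \<subseteq> RG" unfolding U'_def by blast
    have injp: "inj_on p U"
      using homeomorphic_imp_injective_map[OF hU] UA by (simp add: arrows_def Int_absorb1)
    have hU': "homeomorphic_map (subtopology (gtop G) U') (subtopology (gtop H) V) p"
    proof -
      have "p ` (topspace (subtopology (gtop G) U) \<inter> RG) = topspace (subtopology (gtop H) (p ` U)) \<inter> RH"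
        using UA pUA pU' unfolding U'_def V_def by (simp add: arrows_def Int_absorb1)
      from homeomorphic_map_subtopologies[OF hU this]
      show ?thesis unfolding subtopology_subtopology U'_def V_def .
    qed
    define \<U> where "\<U> = (\<lambda>\<gamma>. mult G \<gamma> ` U') ` \<Gamma>"
    show "\<exists>V. openin (subtopology (gtop H) RH) V \<and> y \<in> V \<and>
          (\<exists>\<U>. \<Union> \<U> = {x \<in> RG. p x \<in> V} \<and> pairwise disjnt \<U> \<and>
            (\<forall>U\<in>\<U>. openin (subtopology (gtop G) RG) U \<and>
               homeomorphic_map (subtopology (subtopology (gtop G) RG) U) (subtopology (subtopology (gtop H) RH) V) p))"
    proof (intro exI conjI)
      show "openin (subtopology (gtop H) RH) V" by (rule Vo)
      show "y \<in> V" by (rule yV)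
      show "\<Union> \<U> = {x \<in> RG. p x \<in> V}"
      proof
        show "\<Union> \<U> \<subseteq> {x \<in> RG. p x \<in> V}"
        proof
          fix x assume "x \<in> \<Union> \<U>"
          then obtain \<gamma> a where ga: "\<gamma> \<in> \<Gamma>" "a \<in> U'" "x = mult G \<gamma> a" unfolding \<U>_def by blast
          have "x \<in> RG" using ga act_in Gp U'RG by blast
          moreover have "p x \<in> V" using ga act_p U'RG pU' by auto
          ultimately show "x \<in> {x \<in> RG. p x \<in> V}" by blast
        qed
        show "{x \<in> RG. p x \<in> V} \<subseteq> \<Union> \<U>"
        proof
          fix x assume x: "x \<in> {x \<in> RG. p x \<in> V}"
          then obtain a where a: "a \<in> U'" "p x = p a" using pU' by (metis (no_types, lifting) imageE mem_Collect_eq)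
          then obtain \<gamma> where "\<gamma> \<in> \<Gamma>" "x = mult G \<gamma> a" using orbit[of a x] U'RG x by auto
          then show "x \<in> \<Union> \<U>" unfolding \<U>_def using a by blast
        qed
      qed
      show "pairwise disjnt \<U>"
        unfolding pairwise_def disjnt_def
      proof (intro ballI impI)
        fix S T assume S: "S \<in> \<U>" and T: "T \<in> \<U>" and ST: "S \<noteq> T"
        obtain \<gamma> where g: "\<gamma> \<in> \<Gamma>" "S = mult G \<gamma> ` U'" using S unfolding \<U>_def by blast
        obtain \<delta> where d: "\<delta> \<in> \<Gamma>" "T = mult G \<delta> ` U'" using T unfolding \<U>_def by blast
        show "S \<inter> T = {}"
        proof (rule ccontr)
          assume "S \<inter> T \<noteq> {}"
          then obtain a b where ab: "a \<in> U'" "b \<in> U'" "mult G \<gamma> a = mult G \<delta> b" using g d by blast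
          have "p a = p b" using act_p g d ab U'RG by (metis subsetD)
          then have "a = b" using injp ab unfolding U'_def by (meson IntD1 inj_onD)
          then have "\<gamma> = \<delta>" using free g d ab U'RG by blast
          then show False using ST g d by simp
        qed
      qed
      show "\<forall>S\<in>\<U>. openin (subtopology (gtop G) RG) S \<and>
               homeomorphic_map (subtopology (subtopology (gtop G) RG) S) (subtopology (subtopology (gtop H) RH) V) p"
      proof
        fix S assume S: "S \<in> \<U>"
        obtain \<gamma> where g: "\<gamma> \<in> \<Gamma>" "S = mult G \<gamma> ` U'" using S unfolding \<U>_def by blast
        have SRG: "S \<subseteq> RG" using g act_in Gp U'RG by blast
        show "openin (subtopology (gtop G) RG) S \<and>
               homeomorphic_map (subtopology (subtopology (gtop G) RG) S) (subtopology (subtopology (gtop H) RH) V) p"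
        proof
          show "openin (subtopology (gtop G) RG) S"
            using homeomorphic_map_openness_eq[OF homeo_act[OF g(1)]] U'o g(2) by blast
          have e1: "subtopology (subtopology (gtop G) RG) S = subtopology (gtop G) S"
            using SRG by (simp add: subtopology_subtopology Int_absorb1)
          have e2: "subtopology (subtopology (gtop H) RH) V = subtopology (gtop H) V"
            unfolding V_def by (simp add: subtopology_subtopology Int_absorb1 Int_commute)
          have "homeomorphic_maps (subtopology (gtop G) U') (subtopology (gtop G) S) (mult G \<gamma>) (mult G (ginv G \<gamma>))"
          proof -
            have "homeomorphic_maps (subtopology (subtopology (gtop G) RG) U') (subtopology (subtopology (gtop G) RG) S) (mult G \<gamma>) (mult G (ginv G \<gamma>))"
              using homeomorphic_maps_subtopologies[OF maps_act[OF g(1)]] topRG g(2) U'RG SRG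
              by (simp add: Int_absorb1)
            then show ?thesis using U'RG SRG by (simp add: subtopology_subtopology Int_absorb1)
          qed
          then have hm': "homeomorphic_maps (subtopology (gtop G) S) (subtopology (gtop G) U') (mult G (ginv G \<gamma>)) (mult G \<gamma>)"
            by (rule homeomorphic_maps_sym[THEN iffD1])
          have m1: "homeomorphic_map (subtopology (gtop G) S) (subtopology (gtop G) U') (mult G (ginv G \<gamma>))"
            unfolding homeomorphic_map_maps using hm' by blast
          have m2: "\<forall>z\<in>topspace (subtopology (gtop G) S). mult G \<gamma> (mult G (ginv G \<gamma>) z) = z"
            and m3: "continuous_map (subtopology (gtop G) S) (subtopology (gtop G) U') (mult G (ginv G \<gamma>))"
            using hm' unfolding homeomorphic_maps_def by auto
          have comp: "homeomorphic_map (subtopology (gtop G) S) (subtopology (gtop H) V) (p \<circ> mult G (ginv G \<gamma>))"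
            using homeomorphic_map_compose[OF m1 hU'] .
          have "homeomorphic_map (subtopology (gtop G) S) (subtopology (gtop H) V) p"
          proof (rule homeomorphic_map_eq[OF comp])
            fix z assume z: "z \<in> topspace (subtopology (gtop G) S)"
            have w: "mult G (ginv G \<gamma>) z \<in> U'"
              using continuous_map_image_subset_topspace[OF m3] z by (auto simp: topspace_subtopology)
            have "p z = p (mult G \<gamma> (mult G (ginv G \<gamma>) z))" using m2 z by simp
            also have "\<dots> = p (mult G (ginv G \<gamma>) z)" using act_p g(1) w U'RG by blast
            finally show "(p \<circ> mult G (ginv G \<gamma>)) z = p z" by simp
          qed
          then show "homeomorphic_map (subtopology (subtopology (gtop G) RG) S) (subtopology (subtopology (gtop H) RH) V) p"
            using e1 e2 by simp
        qed
      qed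
    qed
  qed
  show ?thesis
    unfolding regular_covering_by_def RG_def[symmetric] RH_def[symmetric] \<Gamma>_def[symmetric] topRG
    apply (intro conjI ballI impI)
    subgoal by (rule cover)
    subgoal by (rule homeo_act)
    subgoal by (rule act_p)
    subgoal by (rule free) assumption+
    subgoal by (rule orbit) assumption+
    done
qed

definition opg :: "('a, 'b) groupoid_scheme \<Rightarrow> ('a, 'b) groupoid_scheme" where
  "opg G = G\<lparr>dom := rng G, rng := dom G, mult := (\<lambda>a b. mult G b a)\<rparr>"

lemma opg_simps[simp]: "gtop (opg G) = gtop G" "dom (opg G) = rng G" "rng (opg G) = dom G"
  "mult (opg G) = (\<lambda>a b. mult G b a)" "ginv (opg G) = ginv G" "arrows (opg G) = arrows G"
  by (simp_all add: opg_def arrows_def)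

lemma opg_comp: "(g, h) \<in> composable (opg G) \<longleftrightarrow> (h, g) \<in> composable G"
  by (auto simp: composable_def)

lemma opg_groupoid: assumes G: "is_groupoid G" shows "is_groupoid (opg G)"
proof -
  have p1: "\<forall>g\<in>arrows G. rng G g \<in> arrows G \<and> dom G g \<in> arrows G" using gd_arr[OF G] by simp
  have p2: "\<forall>g\<in>arrows G. rng G (rng G g) = rng G g \<and> dom G (rng G g) = rng G g \<and> rng G (dom G g) = dom G g \<and> dom G (dom G g) = dom G g"
    using gd_dd[OF G] by simp
  have p3: "\<forall>(g, h)\<in>composable (opg G). mult G h g \<in> arrows G \<and> rng G (mult G h g) = rng G h \<and> dom G (mult G h g) = dom G g"
  proof
    fix x assume "x \<in> composable (opg G)"
    then obtain g h where x: "x = (g, h)" "g \<in> arrows G" "h \<in> arrows G" "rng G g = dom G h"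
      unfolding composable_def by auto
    then show "case x of (g, h) \<Rightarrow> mult G h g \<in> arrows G \<and> rng G (mult G h g) = rng G h \<and> dom G (mult G h g) = dom G g"
      using gd_mult[OF G x(3) x(2)] by simp
  qed
  have p4: "\<forall>g\<in>arrows G. \<forall>h\<in>arrows G. \<forall>k\<in>arrows G. rng G g = dom G h \<longrightarrow> rng G h = dom G k \<longrightarrow>
        mult G k (mult G h g) = mult G (mult G k h) g"
    using gd_assoc[OF G] by simp
  have p5: "\<forall>g\<in>arrows G. mult G g (dom G g) = g \<and> mult G (rng G g) g = g" using gd_unit[OF G] by simp
  have p6: "\<forall>g\<in>arrows G. ginv G g \<in> arrows G \<and> rng G (ginv G g) = dom G g \<and> dom G (ginv G g) = rng G g \<and>
        mult G (ginv G g) g = dom G g \<and> mult G g (ginv G g) = rng G g" using gd_inv[OF G] by simp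
  show ?thesis unfolding is_groupoid_def opg_simps
    by (rule conjI[OF p1 conjI[OF p2 conjI[OF p3 conjI[OF p4 conjI[OF p5 p6]]]]])
qed

lemma opg_units: assumes G: "is_groupoid G" shows "units (opg G) = units G"
proof
  show "units (opg G) \<subseteq> units G"
  proof
    fix x assume "x \<in> units (opg G)"
    then obtain g where "g \<in> arrows G" "x = rng G g" unfolding units_def by auto
    then show "x \<in> units G" using rng_units[OF G] by simp
  qed
  show "units G \<subseteq> units (opg G)"
  proof
    fix x assume x: "x \<in> units G"
    then have "x \<in> arrows G" "rng G x = x" using units_sub[OF G] unit_rng[OF G] by auto
    then show "x \<in> units (opg G)" unfolding units_def opg_simps by (intro image_eqI[of x "rng G" x]) auto
  qed
qed

lemma opg_top: assumes T: "topological_groupoid G" shows "topological_groupoid (opg G)"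
proof -
  have G: "is_groupoid G" using T by (simp add: topological_groupoid_def)
  have contm: "continuous_map (subtopology (prod_topology (gtop G) (gtop G)) (composable G)) (gtop G) (\<lambda>(g,h). mult G g h)"
    and ci: "continuous_map (gtop G) (gtop G) (ginv G)"
    using T by (simp_all add: topological_groupoid_def)
  have sw: "continuous_map (subtopology (prod_topology (gtop G) (gtop G)) (composable (opg G)))
      (subtopology (prod_topology (gtop G) (gtop G)) (composable G)) (\<lambda>x. (snd x, fst x))"
  proof (rule continuous_map_into_subtopology)
    show "continuous_map (subtopology (prod_topology (gtop G) (gtop G)) (composable (opg G))) (prod_topology (gtop G) (gtop G)) (\<lambda>x. (snd x, fst x))"
      by (intro continuous_map_from_subtopology continuous_map_pairedI continuous_map_snd continuous_map_fst)
    show "(\<lambda>x. (snd x, fst x)) \<in> topspace (subtopology (prod_topology (gtop G) (gtop G)) (composable (opg G))) \<rightarrow> composable G"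
      by (auto simp: topspace_subtopology opg_comp)
  qed
  have "continuous_map (subtopology (prod_topology (gtop G) (gtop G)) (composable (opg G))) (gtop G)
      ((\<lambda>(g,h). mult G g h) \<circ> (\<lambda>x. (snd x, fst x)))"
    using continuous_map_compose[OF sw contm] .
  moreover have "((\<lambda>(g,h). mult G g h) \<circ> (\<lambda>x. (snd x, fst x))) = (\<lambda>(g,h). mult (opg G) g h)"
    by (auto simp: fun_eq_iff)
  ultimately show ?thesis
    unfolding topological_groupoid_def using opg_groupoid[OF G] ci by simp
qed

lemma opg_cover:
  assumes G: "is_groupoid G" and H: "is_groupoid H" and F: "fiberwise_groupoid_covering G H p"
  shows "fiberwise_groupoid_covering (opg G) (opg H) p"
proof -
  have hom: "groupoid_hom G H p" and rest: "p ` arrows G = arrows H"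
    "homeomorphic_map (subtopology (gtop G) (units G)) (subtopology (gtop H) (units H)) p"
    "local_homeomorphism (gtop G) (gtop H) p"
    using F by (auto simp: fiberwise_groupoid_covering_def)
  have h0: "\<forall>g\<in>arrows G. p g \<in> arrows H \<and> p (dom G g) = dom H (p g) \<and> p (rng G g) = rng H (p g)"
    using hom unfolding groupoid_hom_def by (rule conjunct1)
  have h1: "\<forall>g\<in>arrows (opg G). p g \<in> arrows (opg H) \<and> p (dom (opg G) g) = dom (opg H) (p g) \<and> p (rng (opg G) g) = rng (opg H) (p g)"
    unfolding opg_simps
  proof
    fix g assume "g \<in> arrows G"
    then have "p g \<in> arrows H \<and> p (dom G g) = dom H (p g) \<and> p (rng G g) = rng H (p g)" using h0 by (rule bspec[rotated])
    then show "p g \<in> arrows H \<and> p (rng G g) = rng H (p g) \<and> p (dom G g) = dom H (p g)" by (elim conjE) (intro conjI)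
  qed
  have h2: "\<forall>(g, h)\<in>composable (opg G). p (mult (opg G) g h) = mult (opg H) (p g) (p h)"
  proof
    fix x assume "x \<in> composable (opg G)"
    moreover obtain g h where x1: "x = (g, h)" by (cases x)
    ultimately have x2: "(h, g) \<in> composable G" using opg_comp by metis
    note x = x1 x2
    have h3: "\<forall>(g, h)\<in>composable G. p (mult G g h) = mult H (p g) (p h)"
      using hom unfolding groupoid_hom_def by (rule conjunct2)
    have "p (mult G h g) = mult H (p h) (p g)" using bspec[OF h3 x2] by simp
    then show "case x of (g, h) \<Rightarrow> p (mult (opg G) g h) = mult (opg H) (p g) (p h)" using x by simp
  qed
  have "groupoid_hom (opg G) (opg H) p"
    unfolding groupoid_hom_def using h1 h2 by (rule conjI)
  then show ?thesis unfolding fiberwise_groupoid_covering_def opg_units[OF G] opg_units[OF H]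
    using rest by simp
qed

lemma opg_rfiber: "rfiber (opg G) u = dfiber G u"
  by (simp add: rfiber_def dfiber_def)

theorem lemma9p3:
  fixes G :: "('a, 'b) groupoid_scheme" and H :: "('c, 'd) groupoid_scheme" and p :: "'a \<Rightarrow> 'c"
  assumes "topological_groupoid G" and "topological_groupoid H"
    and "fiberwise_groupoid_covering G H p"
    and "u \<in> units G"
  shows "regular_covering_by (subtopology (gtop G) (rfiber G u)) (subtopology (gtop H) (rfiber H (p u)))
           p {\<gamma> \<in> arrows G. p \<gamma> = p u} (\<lambda>\<gamma> g. mult G \<gamma> g)
       \<and> regular_covering_by (subtopology (gtop G) (dfiber G u)) (subtopology (gtop H) (dfiber H (p u)))
           p {\<gamma> \<in> arrows G. p \<gamma> = p u} (\<lambda>\<gamma> g. mult G g \<gamma>)"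
proof
  show "regular_covering_by (subtopology (gtop G) (rfiber G u)) (subtopology (gtop H) (rfiber H (p u)))
           p {\<gamma> \<in> arrows G. p \<gamma> = p u} (\<lambda>\<gamma> g. mult G \<gamma> g)"
    using rcase[OF assms] .
  have G: "is_groupoid G" and H: "is_groupoid H" using assms by (simp_all add: topological_groupoid_def)
  have "regular_covering_by (subtopology (gtop (opg G)) (rfiber (opg G) u)) (subtopology (gtop (opg H)) (rfiber (opg H) (p u)))
           p {\<gamma> \<in> arrows (opg G). p \<gamma> = p u} (\<lambda>\<gamma> g. mult (opg G) \<gamma> g)"
    using rcase[OF opg_top[OF assms(1)] opg_top[OF assms(2)] opg_cover[OF G H assms(3)]] assms(4) opg_units[OF G]
    by simp
  then show "regular_covering_by (subtopology (gtop G) (dfiber G u)) (subtopology (gtop H) (dfiber H (p u)))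
           p {\<gamma> \<in> arrows G. p \<gamma> = p u} (\<lambda>\<gamma> g. mult G g \<gamma>)"
    by (simp add: opg_rfiber)
qed

end
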